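(* Let $A$ be a finite alphabet with $|A|=k$, and let $L\subseteq A^*$ be $n$-PT. Let $m=f_k(n)$. Then $I(L)$ is $(m+1)$-PT.
   Context: For words $u,v$, $u\sqsubseteq v$ (subword) means $u=a_1\cdots a_\ell$ with letters $a_i$ and $v=v_0a_1v_1\cdots a_\ell v_\ell$ for some words $v_i$. $u\perp v$ means $u\not\sqsubseteq v$ and $v\not\sqsubseteq u$. $I(L)=\{u\in A^*~|~\exists v\in L: u\perp v\}$. For $n\in\mathbb{N}$, $u\sim_n v$ iff $u$ and $v$ have exactly the same subwords of length at most $n$; $L$ is $n$-PT if it is a union of $\sim_n$-classes. The functions $f_k:\mathbb{N}\to\mathbb{N}$ ($k\geq1$) are defined by $f_1(n)=n$ and $f_{k+1}(n)=\max_{0\leq m\leq n}\bigl(m f_k(n+1-m)+m+f_k(n-m)\bigr)$. *)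

theory Defs
  imports Main "HOL-Library.Sublist"
begin

text \<open>Words over the alphabet A are lists over a (finite) type 'a; the subword
  ordering is the library's subseq (scattered subword embedding).\<close>

definition incomparable :: "'a list \<Rightarrow> 'a list \<Rightarrow> bool" where
  "incomparable u v \<longleftrightarrow> \<not> subseq u v \<and> \<not> subseq v u"

definition Inc :: "'a list set \<Rightarrow> 'a list set" where
  "Inc L = {u. \<exists>v\<in>L. incomparable u v}"

definition simn :: "nat \<Rightarrow> 'a list \<Rightarrow> 'a list \<Rightarrow> bool" where
  "simn n u v \<longleftrightarrow> (\<forall>w. length w \<le> n \<longrightarrow> (subseq w u \<longleftrightarrow> subseq w v))"

definition PT :: "nat \<Rightarrow> 'a list set \<Rightarrow> bool" where
  "PT n L \<longleftrightarrow> (\<forall>u v. simn n u v \<longrightarrow> (u \<in> L \<longleftrightarrow> v \<in> L))"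

text \<open>f k n for k \<ge> 1; the value at k = 0 is an irrelevant convention.\<close>
fun f :: "nat \<Rightarrow> nat \<Rightarrow> nat" where
  "f 0 n = n"
| "f (Suc 0) n = n"
| "f (Suc (Suc k)) n = Max ((\<lambda>m. m * f (Suc k) (n + 1 - m) + m + f (Suc k) (n - m)) ` {0..n})"

end

theory Submission
  imports Defs
begin

lemma subseq_trans: "subseq a b \<Longrightarrow> subseq b c \<Longrightarrow> subseq a c"
  using subseq_order.order_trans by blast

lemma subseq_set: "subseq xs ys \<Longrightarrow> set xs \<subseteq> set ys"
  by (induction rule: list_emb.induct) auto

lemma subseq_del_mid: "subseq (x @ y) (x @ a # y)"
  by (simp add: subseq_append' list_emb_Cons)

lemma subseq_drop_self: "subseq (drop k xs) xs"
  by (simp add: suffix_drop suffix_imp_subseq)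

lemma subseq_take_self: "subseq (take k xs) xs"
  by (simp add: take_is_prefix prefix_imp_subseq)
lemma simn_refl: "simn N u u" by (simp add: simn_def)
lemma simn_sym: "simn N u v \<Longrightarrow> simn N v u" by (auto simp: simn_def)
lemma simn_trans: "simn N u v \<Longrightarrow> simn N v w \<Longrightarrow> simn N u w" by (auto simp: simn_def)
lemma simn_mono: "simn N u v \<Longrightarrow> M \<le> N \<Longrightarrow> simn M u v" by (auto simp: simn_def)
lemma simnD: "simn N u v \<Longrightarrow> length w \<le> N \<Longrightarrow> subseq w u \<Longrightarrow> subseq w v" by (auto simp: simn_def)

lemma sandwich:
  assumes "subseq w z" "subseq z u" "simn N w u"
  shows "simn N z u"
  unfolding simn_def
proof (intro allI impI iffI)
  fix t assume "length t \<le> N" "subseq t z"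
  then show "subseq t u" using assms(2) subseq_trans by blast
next
  fix t assume "length t \<le> N" "subseq t u"
  then have "subseq t w" using assms(3) by (auto simp: simn_def)
  then show "subseq t z" using assms(1) subseq_trans by blast
qed

lemma subseq_del:
  assumes "subseq s w" "length s < length w"
  shows "\<exists>x a y. w = x @ a # y \<and> subseq s (x @ y)"
  using assms
proof (induction rule: list_emb.induct)
  case (list_emb_Nil ys)
  then obtain a y where "ys = a # y" by (cases ys) auto
  then show ?case by (intro exI[of _ "[]"]) auto
next
  case (list_emb_Cons xs ys y)
  then show ?case by (intro exI[of _ "[]"] exI[of _ y] exI[of _ ys]) auto
next
  case (list_emb_Cons2 x y xs ys)
  then obtain x' a y' where "ys = x' @ a # y'" "subseq xs (x' @ y')" by auto
  then show ?case using list_emb_Cons2 by (intro exI[of _ "y # x'"] exI[of _ a] exI[of _ y']) auto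
qed

lemma subseq_ins:
  assumes "subseq s t" "length t = Suc (length s)"
  shows "\<exists>x a y. t = x @ a # y \<and> s = x @ y"
proof -
  have "length s < length t" using assms(2) by simp
  then obtain x a y where "t = x @ a # y" "subseq s (x @ y)" using subseq_del[OF assms(1)] by blast
  moreover then have "length s = length (x @ y)" using assms by simp
  ultimately show ?thesis using subseq_same_length by blast
qed

lemma subseq_mid:
  assumes "subseq s w" "length s \<le> l" "l \<le> length w"
  shows "\<exists>z. subseq s z \<and> subseq z w \<and> length z = l"
  using assms
proof (induction "length w - l" arbitrary: w)
  case 0
  then show ?case by (intro exI[of _ w]) auto
next
  case (Suc d)
  then have "length s < length w" by linarith
  then obtain x a y where w: "w = x @ a # y" "subseq s (x @ y)" using subseq_del Suc.prems by blast
  have "d = length (x@y) - l" using Suc.hyps w by simp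
  moreover have "l \<le> length (x@y)" using Suc w by simp
  ultimately obtain z where "subseq s z" "subseq z (x@y)" "length z = l"
    using Suc.hyps(1) w(2) Suc.prems(2) by blast
  moreover have "subseq (x@y) w" using w subseq_del_mid by simp
  ultimately show ?case using subseq_trans by blast
qed

lemma subseq_snoc_cases:
  assumes "subseq t (x @ [a])"
  shows "subseq t x \<or> (\<exists>t'. t = t' @ [a] \<and> subseq t' x)"
proof -
  obtain t1 t2 where t: "t = t1 @ t2" "subseq t1 x" "subseq t2 [a]" using assms by (rule subseq_appendE)
  then have "t2 = [] \<or> t2 = [a]" by (cases t2) (auto split: if_splits)
  then show ?thesis using t by auto
qed

lemma subseq_cons_cases:
  assumes "subseq t (a # y)"
  shows "subseq t y \<or> (\<exists>t'. t = a # t' \<and> subseq t' y)"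
  using assms by (cases t) (auto split: if_splits)

lemma subseq_split_right:
  assumes "subseq (p @ c # q) (x @ z)" "\<not> subseq (p @ [c]) x"
  shows "subseq (c # q) z"
proof -
  obtain u1 u2 where u: "p @ c # q = u1 @ u2" "subseq u1 x" "subseq u2 z"
    using assms(1) by (rule subseq_appendE)
  have le: "length u1 \<le> length p"
  proof (rule ccontr)
    assume "\<not> length u1 \<le> length p"
    have "p @ [c] = take (Suc (length p)) (p @ c # q)" by simp
    also have "\<dots> = take (Suc (length p)) (u1 @ u2)" using u(1) by simp
    also have "\<dots> = take (Suc (length p)) u1" using \<open>\<not> length u1 \<le> length p\<close> by simp
    finally have eq: "p @ [c] = take (Suc (length p)) u1" .
    have "subseq (p @ [c]) u1" unfolding eq by (rule subseq_take_self)
    then show False using u(2) assms(2) subseq_trans by blast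
  qed
  have "drop (length p) (p @ c # q) = c # q" by simp
  moreover have "drop (length p) (u1 @ u2) = drop (length p - length u1) u2" using le by simp
  ultimately have eq2: "c # q = drop (length p - length u1) u2" using u(1) by metis
  have "subseq (c # q) u2" unfolding eq2 by (rule subseq_drop_self)
  then show ?thesis using u(3) subseq_trans by blast
qed

lemma pump:
  assumes h: "simn n (x @ y) (x @ a # y)"
  shows "simn n (x @ a # a # y) (x @ a # y)"
  unfolding simn_def
proof (intro allI impI iffI)
  fix t assume "length t \<le> n" and st0: "subseq t (x @ a # y)"
  have "subseq (x @ a # y) (x @ a # a # y)"
    using subseq_del_mid[of "x @ [a]" y a] by simp
  then show "subseq t (x @ a # a # y)" by (rule subseq_trans[OF st0])
next
  fix t assume len: "length t \<le> n" and st: "subseq t (x @ a # a # y)"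
  from st have "subseq t ((x @ [a]) @ (a # y))" by simp
  then obtain t1 t2 where t: "t = t1 @ t2" "subseq t1 (x @ [a])" "subseq t2 (a # y)"
    by (rule subseq_appendE)
  show "subseq t (x @ a # y)"
  proof (cases "subseq t1 x")
    case True then show ?thesis using t(1) list_emb_append_mono[OF True t(3)] by simp
  next
    case False
    then have "\<exists>t1'. t1 = t1' @ [a] \<and> subseq t1' x" using subseq_snoc_cases[OF t(2)] by simp
    then obtain t1' where t1: "t1 = t1' @ [a]" "subseq t1' x" by auto
    show ?thesis
    proof (cases "subseq t2 y")
      case True
      have "t = t1' @ a # t2" using t t1 by simp
      then show ?thesis using list_emb_append_mono[OF t1(2) subseq_Cons2[OF True]] by simp
    next
      case False
      then have "\<exists>t2'. t2 = a # t2' \<and> subseq t2' y" using subseq_cons_cases[OF t(3)] by simp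
      then obtain t2' where t2: "t2 = a # t2'" "subseq t2' y" by auto
      show ?thesis
      proof (cases "subseq (t1' @ [a]) x")
        case True
        have "t = (t1' @ [a]) @ (a # t2')" using t t1 t2 by simp
        moreover have "subseq (a # t2') (a # y)" using t2 by simp
        ultimately show ?thesis using list_emb_append_mono[OF True] by simp
      next
        case F1: False
        show ?thesis
        proof (cases "subseq (a # t2') y")
          case True
          have "t = t1' @ a # a # t2'" using t t1 t2 by simp
          moreover have "subseq (a # (a # t2')) (a # y)" using True by (rule subseq_Cons2)
          ultimately show ?thesis using list_emb_append_mono[OF t1(2)] by simp
        next
          case F2: False
          have "subseq (t1' @ a # t2') (x @ a # y)"
            using list_emb_append_mono[OF t1(2) subseq_Cons2[OF t2(2)]] by simp
          moreover have "length (t1' @ a # t2') \<le> n" using len t t1 t2 by simp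
          ultimately have "subseq (t1' @ a # t2') (x @ y)" using h by (auto simp: simn_def)
          then have "subseq (a # t2') y" using subseq_split_right F1 by (metis append_Nil2)
          then show ?thesis using F2 by simp
        qed
      qed
    qed
  qed
qed

definition g :: "nat \<Rightarrow> nat \<Rightarrow> nat" where "g k n = (if k = 0 then 0 else f k n)"

lemma g_le_f: "g k n \<le> f (Suc k) n"
proof (cases k)
  case 0 then show ?thesis by (simp add: g_def)
next
  case (Suc k')
  have mem: "(\<lambda>m. m * f (Suc k') (n + 1 - m) + m + f (Suc k') (n - m)) 0 \<in>
        (\<lambda>m. m * f (Suc k') (n + 1 - m) + m + f (Suc k') (n - m)) ` {0..n}" by (rule imageI) simp
  have "f (Suc k') n \<le> Max ((\<lambda>m. m * f (Suc k') (n + 1 - m) + m + f (Suc k') (n - m)) ` {0..n})"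
    using Max_ge[OF _ mem] by simp
  then show ?thesis using Suc by (simp add: g_def)
qed

lemma g_bound: "m \<le> n \<Longrightarrow> m * g k (n + 1 - m) + m + g k (n - m) \<le> f (Suc k) n"
proof (cases k)
  case 0 then show "m \<le> n \<Longrightarrow> ?thesis" by (simp add: g_def)
next
  case (Suc k')
  assume mn: "m \<le> n"
  have "(\<lambda>m. m * f (Suc k') (n + 1 - m) + m + f (Suc k') (n - m)) m \<in>
        (\<lambda>m. m * f (Suc k') (n + 1 - m) + m + f (Suc k') (n - m)) ` {0..n}" using mn by simp
  then have "m * f (Suc k') (n + 1 - m) + m + f (Suc k') (n - m) \<le> Max ((\<lambda>m. m * f (Suc k') (n + 1 - m) + m + f (Suc k') (n - m)) ` {0..n})"
    by (simp add: Max_ge)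
  then show ?thesis using Suc by (simp add: g_def)
qed

lemma f_ge: "k \<ge> 1 \<Longrightarrow> n \<le> f k n"
proof (induction k rule: nat_induct_at_least)
  case base then show ?case by simp
next
  case (Suc k)
  have "g k n \<le> f (Suc k) n" by (rule g_le_f)
  with Suc show ?case by (auto simp: g_def)
qed

lemma decomp: "B \<subseteq> set v \<Longrightarrow> B \<noteq> {} \<Longrightarrow> \<exists>s a R. v = s @ a # R \<and> a \<notin> set s \<and> B \<subseteq> insert a (set s)"
proof (induction v rule: rev_induct)
  case Nil then show ?case by simp
next
  case (snoc c v)
  show ?case
  proof (cases "B \<subseteq> set v")
    case True
    then obtain s a R where "v = s @ a # R" "a \<notin> set s" "B \<subseteq> insert a (set s)" using snoc by auto
    then show ?thesis by (intro exI[of _ s] exI[of _ a] exI[of _ "R @ [c]"]) auto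
  next
    case False
    then have "c \<notin> set v" using snoc.prems by auto
    moreover have "B \<subseteq> insert c (set v)" using snoc.prems by auto
    ultimately show ?thesis by (intro exI[of _ v] exI[of _ c] exI[of _ "[]"]) auto
  qed
qed

lemma arch:
  assumes a: "a \<notin> set s" and R: "set R \<subseteq> insert a (set s)"
    and ws: "subseq ws s" "simn p ws s" and wR: "subseq wR R" "simn (n - 1) wR R"
    and univ: "\<And>\<beta>. set \<beta> \<subseteq> insert a (set s) \<Longrightarrow> length \<beta> \<le> q \<Longrightarrow> subseq \<beta> wR"
    and pq: "n \<le> p + q"
  shows "simn n (ws @ a # wR) (s @ a # R)"
  unfolding simn_def
proof (intro allI impI iffI)
  fix t assume "length t \<le> n" and h: "subseq t (ws @ a # wR)"
  have "subseq (ws @ a # wR) (s @ a # R)" using list_emb_append_mono[OF ws(1) subseq_Cons2[OF wR(1)]] .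
  then show "subseq t (s @ a # R)" by (rule subseq_trans[OF h])
next
  fix t assume len: "length t \<le> n" and h: "subseq t (s @ a # R)"
  have tset: "set t \<subseteq> insert a (set s)" using subseq_set[OF h] R by auto
  have wsub: "subseq (ws @ wR) (ws @ a # wR)" by (rule subseq_del_mid)
  define J where "J = {j. j \<le> length t \<and> subseq (take j t) s}"
  have finJ: "finite J" unfolding J_def by simp
  have "0 \<in> J" unfolding J_def by simp
  define j where "j = Max J"
  have jJ: "j \<in> J" unfolding j_def using finJ \<open>0 \<in> J\<close> Max_in by blast
  have jmax: "\<And>j'. j' \<in> J \<Longrightarrow> j' \<le> j" unfolding j_def using finJ by simp
  from jJ have jt: "j \<le> length t" and js: "subseq (take j t) s" unfolding J_def by auto
  show "subseq t (ws @ a # wR)"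
  proof (cases "length t - q \<le> j")
    case True
    define \<alpha> where "\<alpha> = take (length t - q) t"
    define \<beta> where "\<beta> = drop (length t - q) t"
    have "\<alpha> = take (length t - q) (take j t)" unfolding \<alpha>_def using True by (simp add: min_def)
    then have "subseq \<alpha> (take j t)" using subseq_take_self by metis
    then have "subseq \<alpha> s" using js by (rule subseq_trans)
    moreover have "length \<alpha> \<le> p" unfolding \<alpha>_def using len pq by simp
    ultimately have a1: "subseq \<alpha> ws" using ws(2) simnD simn_sym by metis
    have "set \<beta> \<subseteq> insert a (set s)" unfolding \<beta>_def using tset set_drop_subset by fastforce
    moreover have "length \<beta> \<le> q" unfolding \<beta>_def by simp
    ultimately have b1: "subseq \<beta> wR" by (rule univ)
    have "t = \<alpha> @ \<beta>" unfolding \<alpha>_def \<beta>_def by simp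
    then have "subseq t (ws @ wR)" using list_emb_append_mono[OF a1 b1] by simp
    then show ?thesis by (rule subseq_trans[OF _ wsub])
  next
    case False
    then have jlt: "j < length t" by simp
    have jp: "j \<le> p" using False len pq by simp
    have tj: "subseq (take j t) ws" using js jp ws(2) simnD simn_sym by (metis length_take min_le_iff_disj)
    have notJ: "Suc j \<notin> J" using jmax by fastforce
    have tk: "take (Suc j) t = take j t @ [t ! j]" using jlt by (simp add: take_Suc_conv_app_nth)
    have nsub: "\<not> subseq (take j t @ [t ! j]) s" using notJ jlt tk unfolding J_def by simp
    have td: "t = take j t @ t ! j # drop (Suc j) t" using jlt by (simp add: id_take_nth_drop)
    have "subseq (take j t @ t ! j # drop (Suc j) t) (s @ (a # R))" using h td by simp
    then have cg: "subseq (t ! j # drop (Suc j) t) (a # R)" using subseq_split_right nsub by metis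
    show ?thesis
    proof (cases "t ! j = a")
      case True
      then have "subseq (drop (Suc j) t) R" using cg by simp
      moreover have "length (drop (Suc j) t) \<le> n - 1" using len by simp
      ultimately have "subseq (drop (Suc j) t) wR" using wR(2) simnD simn_sym by metis
      then have "subseq (t ! j # drop (Suc j) t) (a # wR)" using True by simp
      then have "subseq (take j t @ t ! j # drop (Suc j) t) (ws @ a # wR)"
        using list_emb_append_mono[OF tj] by simp
      then show ?thesis using td by simp
    next
      case False
      then have cR: "subseq (t ! j # drop (Suc j) t) R" using cg by simp
      have "t ! j \<in> set t" using jlt by simp
      then have "t ! j \<in> set s" using tset False by auto
      have "j \<noteq> 0"
      proof
        assume "j = 0"
        then have "take j t @ [t ! j] = [t ! j]" by simp
        with nsub \<open>t ! j \<in> set s\<close> show False by (simp add: subseq_singleton_left)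
      qed
      then have "length (t ! j # drop (Suc j) t) \<le> n - 1" using len jlt by simp
      then have "subseq (t ! j # drop (Suc j) t) wR" using cR wR(2) simnD simn_sym by metis
      then have "subseq (take j t @ t ! j # drop (Suc j) t) (ws @ wR)"
        using list_emb_append_mono[OF tj] by simp
      then have "subseq t (ws @ wR)" using td by simp
      then show ?thesis by (rule subseq_trans[OF _ wsub])
    qed
  qed
qed

lemma lemmaA_step:
  fixes B :: "'a set"
  assumes IH: "\<forall>(B' :: 'a set) v n. finite B' \<longrightarrow> card B' \<le> k \<longrightarrow> set v \<subseteq> B' \<longrightarrow> (\<exists>w. subseq w v \<and> simn n w v \<and> length w \<le> g k n)"
    and fB: "finite B" and cB: "card B = Suc k"
  shows "set v \<subseteq> B \<Longrightarrow> \<exists>m\<le>n. (\<forall>\<beta>. set \<beta> \<subseteq> B \<longrightarrow> length \<beta> \<le> m \<longrightarrow> subseq \<beta> v) \<and>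
            (\<exists>w. subseq w v \<and> simn n w v \<and> length w \<le> m * g k (n + 1 - m) + m + g k (n - m))"
proof (induction "length v" arbitrary: v n rule: less_induct)
  case less
  show ?case
  proof (cases "set v = B")
    case False
    then have "set v \<subset> B" using less.prems by auto
    then have "card (set v) < card B" using fB psubset_card_mono by blast
    then have "card (set v) \<le> k" using cB by simp
    then have "\<exists>w. subseq w v \<and> simn n w v \<and> length w \<le> g k n" using IH[rule_format, of "set v" v n] by simp
    then obtain w where w: "subseq w v" "simn n w v" "length w \<le> g k n" by (elim exE conjE) auto
    show ?thesis
      by (rule exI[of _ 0]) (use w in auto)
  next
    case True
    show ?thesis
    proof (cases n)
      case 0
      have "simn 0 [] v" by (auto simp: simn_def)
      then show ?thesis using 0 by (intro exI[of _ 0]) auto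
    next
      case (Suc n')
      have "B \<noteq> {}" using cB by auto
      then obtain s a R where v: "v = s @ a # R" and as: "a \<notin> set s" and Bs: "B \<subseteq> insert a (set s)"
        using decomp[of B v] True by auto
      have Bs': "B = insert a (set s)" using Bs True v by auto
      have lR: "length R < length v" using v by simp
      have sR: "set R \<subseteq> B" using True v by auto
      from less.hyps[OF lR sR, of n'] obtain m'' wR where m'': "m'' \<le> n'" and univR: "\<forall>\<beta>. set \<beta> \<subseteq> B \<longrightarrow> length \<beta> \<le> m'' \<longrightarrow> subseq \<beta> R"
        and wR: "subseq wR R" "simn n' wR R" "length wR \<le> m'' * g k (n' + 1 - m'') + m'' + g k (n' - m'')"
        by (elim exE conjE)
      have cs: "card (set s) = k" using Bs' as cB by (simp add: card_insert_if)
      have "card (set s) \<le> k" using cs by simp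
      then have "\<exists>w. subseq w s \<and> simn (n - m'') w s \<and> length w \<le> g k (n - m'')" using IH[rule_format, of "set s" s "n - m''"] by simp
      then obtain ws where ws: "subseq ws s" "simn (n - m'') ws s" "length ws \<le> g k (n - m'')"
        by (elim exE conjE) auto
      have univ: "\<And>\<beta>. set \<beta> \<subseteq> insert a (set s) \<Longrightarrow> length \<beta> \<le> m'' \<Longrightarrow> subseq \<beta> wR"
      proof -
        fix \<beta> :: "'a list" assume "set \<beta> \<subseteq> insert a (set s)" "length \<beta> \<le> m''"
        then have "subseq \<beta> R" using univR Bs' by auto
        moreover have "length \<beta> \<le> n'" using \<open>length \<beta> \<le> m''\<close> m'' by simp
        ultimately show "subseq \<beta> wR" using simnD[OF simn_sym[OF wR(2)]] by simp
      qed
      have sR': "set R \<subseteq> insert a (set s)" using sR Bs' by simp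
      have wRn: "simn (n - 1) wR R" using wR(2) Suc by simp
      have pq: "n \<le> (n - m'') + m''" using m'' Suc by simp
      have sim: "simn n (ws @ a # wR) (s @ a # R)"
        by (rule arch[where p="n - m''" and q="m''" and n=n, OF as sR' ws(1) ws(2) wR(1) wRn univ pq])
      have univv: "\<forall>\<beta>. set \<beta> \<subseteq> B \<longrightarrow> length \<beta> \<le> Suc m'' \<longrightarrow> subseq \<beta> v"
      proof (intro allI impI)
        fix \<beta> :: "'a list" assume b: "set \<beta> \<subseteq> B" "length \<beta> \<le> Suc m''"
        show "subseq \<beta> v"
        proof (cases \<beta>)
          case Nil then show ?thesis by simp
        next
          case (Cons c \<beta>')
          then have "c \<in> set (s @ [a])" using b Bs' by auto
          then have c1: "subseq [c] (s @ [a])" by (simp add: subseq_singleton_left)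
          have "subseq \<beta>' R" using univR b Cons by auto
          then have "subseq ([c] @ \<beta>') ((s @ [a]) @ R)" by (rule list_emb_append_mono[OF c1])
          then show ?thesis using Cons v by simp
        qed
      qed
      have e1: "Suc n' + 1 - Suc m'' = Suc n' - m''" using m'' by simp
      have e2: "n' + 1 - m'' = Suc n' - m''" using m'' by simp
      have e3: "Suc n' - Suc m'' = n' - m''" by simp
      have len: "length (ws @ a # wR) \<le> Suc m'' * g k (n + 1 - Suc m'') + Suc m'' + g k (n - Suc m'')"
        using ws(3) wR(3) Suc e1 e2 e3 by simp
      have sub: "subseq (ws @ a # wR) v" using v list_emb_append_mono[OF ws(1) subseq_Cons2[OF wR(1)]] by simp
      have "Suc m'' \<le> n" using m'' Suc by simp
      then show ?thesis using univv sub sim len v by (intro exI[of _ "Suc m''"] conjI exI[of _ "ws @ a # wR"]) auto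
    qed
  qed
qed

lemma lemmaA_gen:
  fixes B :: "'a set"
  shows "finite B \<Longrightarrow> card B \<le> k \<Longrightarrow> set v \<subseteq> B \<Longrightarrow> \<exists>w. subseq w v \<and> simn n w v \<and> length w \<le> g k n"
proof (induction k arbitrary: B v n)
  case 0
  then have "v = []" by auto
  then show ?case by (intro exI[of _ "[]"]) (auto simp: simn_refl g_def)
next
  case (Suc k)
  show ?case
  proof (cases "card B \<le> k")
    case True
    from Suc.IH[OF Suc.prems(1) True Suc.prems(3), of n] obtain w where "subseq w v" "simn n w v" "length w \<le> g k n" by (elim exE conjE)
    moreover have "g k n \<le> g (Suc k) n" using g_le_f[of k n] by (simp add: g_def)
    ultimately show ?thesis by (intro exI[of _ w]) auto
  next
    case False
    then have cB: "card B = Suc k" using Suc.prems by simp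
    have IHk: "\<forall>(B' :: 'a set) v n. finite B' \<longrightarrow> card B' \<le> k \<longrightarrow> set v \<subseteq> B' \<longrightarrow> (\<exists>w. subseq w v \<and> simn n w v \<and> length w \<le> g k n)"
      using Suc.IH by blast
    from lemmaA_step[where k=k and B=B and v=v and n=n, OF IHk Suc.prems(1) cB Suc.prems(3)]
    obtain m w where m: "m \<le> n" and w: "subseq w v" "simn n w v" "length w \<le> m * g k (n + 1 - m) + m + g k (n - m)"
      by (elim exE conjE)
    have "m * g k (n + 1 - m) + m + g k (n - m) \<le> g (Suc k) n" using g_bound[OF m, of k] by (simp add: g_def)
    then show ?thesis using w by (intro exI[of _ w]) auto
  qed
qed

lemma lemmaA:
  fixes v :: "('a::finite) list"
  assumes "card (UNIV :: 'a set) = k"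
  shows "\<exists>w. subseq w v \<and> simn n w v \<and> length w \<le> f k n"
proof -
  have "k \<noteq> 0" using assms card_gt_0_iff[of "UNIV :: 'a set"] by simp
  then show ?thesis using lemmaA_gen[of "UNIV :: 'a set" k v n] assms by (simp add: g_def)
qed

definition Kc :: "nat \<Rightarrow> 'a list \<Rightarrow> 'a list \<Rightarrow> bool" where
  "Kc n v w \<longleftrightarrow> (\<forall>z. simn n z v \<longrightarrow> subseq z w \<or> subseq w z)"

lemma Kc_short:
  assumes "Kc n v w" "simn n z v" "length z \<le> length w" shows "subseq z w"
proof -
  have "subseq z w \<or> subseq w z" using assms(1,2) unfolding Kc_def by simp
  then show ?thesis
  proof
    assume h: "subseq w z"
    then have "length w = length z" using list_emb_length[OF h] assms(3) by simp
    then have "w = z" using subseq_same_length[OF h] by simp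
    then show ?thesis by simp
  qed
qed

lemma Kc_long:
  assumes "Kc n v w" "simn n z v" "length w \<le> length z" shows "subseq w z"
proof -
  have "subseq z w \<or> subseq w z" using assms(1,2) unfolding Kc_def by simp
  then show ?thesis
  proof
    assume h: "subseq z w"
    then have "length w = length z" using list_emb_length[OF h] assms(3) by simp
    then have "z = w" using subseq_same_length[OF h] by simp
    then show ?thesis by simp
  qed
qed

lemma Kc_eq:
  assumes "Kc n v w" "simn n z v" "length z = length w" shows "z = w"
proof -
  have "subseq z w" using Kc_short[OF assms(1,2)] assms(3) by simp
  then show ?thesis using assms(3) by (rule subseq_same_length)
qed

lemma pumpj:
  assumes h: "simn n (x @ y) (x @ a # y)"
  shows "simn n (x @ replicate j a @ y) (x @ a # y)"
proof -
  have "simn n (x @ replicate j a @ y) (x @ a # y) \<and> simn n (x @ replicate (Suc j) a @ y) (x @ a # y)"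
  proof (induction j)
    case 0 then show ?case using h simn_refl by simp
  next
    case (Suc j)
    define x' where "x' = x @ replicate j a"
    have e1: "x @ replicate j a @ y = x' @ y" unfolding x'_def by simp
    have e2: "x @ replicate (Suc j) a @ y = x' @ a # y" unfolding x'_def by (simp add: replicate_app_Cons_same)
    have e3: "x @ replicate (Suc (Suc j)) a @ y = x' @ a # a # y" unfolding x'_def by (simp add: replicate_app_Cons_same)
    have h1: "simn n (x' @ y) (x @ a # y)" using conjunct1[OF Suc.IH] unfolding e1 .
    have h2: "simn n (x' @ a # y) (x @ a # y)" using conjunct2[OF Suc.IH] unfolding e2 .
    have "simn n (x' @ y) (x' @ a # y)" using simn_trans[OF h1 simn_sym[OF h2]] .
    then have "simn n (x' @ a # a # y) (x' @ a # y)" by (rule pump)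
    then have h3: "simn n (x' @ a # a # y) (x @ a # y)" using simn_trans h2 by blast
    show ?case unfolding e2 e3 using h2 h3 by (rule conjI)
  qed
  then show ?thesis by simp
qed

lemma nonmin:
  fixes z :: "'a list"
  assumes HA: "\<forall>z::'a list. \<exists>w. subseq w z \<and> simn n w z \<and> length w \<le> m" and lz: "m < length z"
  shows "\<exists>x a y. z = x @ a # y \<and> simn n (x @ y) z"
proof -
  from spec[OF HA, of z] obtain w where w: "subseq w z" "simn n w z" "length w \<le> m" by (elim exE conjE)
  then have "length w < length z" using lz by simp
  from subseq_del[OF w(1) this] obtain x a y where z: "z = x @ a # y" and wxy: "subseq w (x @ y)"
    by (elim exE conjE)
  have "subseq (x @ y) z" using z subseq_del_mid by simp
  then have "simn n (x @ y) z" using sandwich[OF wxy _ w(2)] by simp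
  then show ?thesis using z by auto
qed

lemma pump_up:
  fixes z :: "'a list"
  assumes HA: "\<forall>z::'a list. \<exists>w. subseq w z \<and> simn n w z \<and> length w \<le> m" and lz: "m < length z" and zl: "length z \<le> l"
  shows "\<exists>z'. subseq z z' \<and> length z' = l \<and> simn n z' z"
proof -
  obtain x a y where z: "z = x @ a # y" and h: "simn n (x @ y) z" using nonmin[OF HA lz] by (elim exE conjE)
  define j where "j = l - length z"
  define z' where "z' = x @ replicate j a @ a # y"
  have ez: "z' = x @ replicate (Suc j) a @ y" unfolding z'_def by (simp add: replicate_app_Cons_same)
  have "simn n (x @ y) (x @ a # y)" using h z by simp
  then have "simn n z' (x @ a # y)" unfolding ez by (rule pumpj)
  then have s: "simn n z' z" using z by simp
  have "subseq (a # y) (replicate j a @ a # y)" by (rule subseq_drop_many) simp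
  then have "subseq z z'" unfolding z z'_def by (simp add: subseq_append')
  moreover have "length z' = l" unfolding z'_def j_def using zl z by simp
  ultimately show ?thesis using s by auto
qed

lemma pump_down:
  fixes z :: "'a list"
  assumes HA: "\<forall>z::'a list. \<exists>w. subseq w z \<and> simn n w z \<and> length w \<le> m" and ml: "m \<le> l" and lz: "l \<le> length z"
  shows "\<exists>z'. subseq z' z \<and> length z' = l \<and> simn n z' z"
proof -
  from spec[OF HA, of z] obtain w where w: "subseq w z" "simn n w z" "length w \<le> m" by (elim exE conjE)
  have "length w \<le> l" using w(3) ml by simp
  from subseq_mid[OF w(1) this lz] obtain z' where z': "subseq w z'" "subseq z' z" "length z' = l" by (elim exE conjE)
  have "simn n z' z" using sandwich[OF z'(1) z'(2) w(2)] .
  then show ?thesis using z' by auto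
qed

lemma upu:
  assumes K: "Kc n v w" and Cw: "simn n w v" and w: "w = x @ a # y" and Cxy: "simn n (x @ y) v"
    and Ct: "simn n t v" and lt: "length t = Suc (length w)"
  shows "t = x @ a # a # y"
proof -
  have "subseq w t" using Kc_long[OF K Ct] lt by simp
  then obtain x1 b x2 where t: "t = x1 @ b # x2" and wx: "w = x1 @ x2" using subseq_ins lt by (metis)
  have xyt: "simn n (x @ y) t" using simn_trans[OF Cxy simn_sym[OF Ct]] .
  have caseB: "t = x @ a # a # y" if h1: "x1 @ us = x" and h2: "x2 = us @ a # y" for us
  proof -
    define t' where "t' = x1 @ b # us @ y"
    have "subseq (us @ y) (b # us @ y)" by (rule list_emb_Cons) simp
    then have s1: "subseq (x @ y) t'" unfolding t'_def using h1[symmetric] by (simp add: subseq_append')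
    have s2: "subseq t' t" unfolding t'_def t h2 using subseq_del_mid[of "x1 @ b # us" y a] by simp
    have "simn n t' t" using sandwich[OF s1 s2 xyt] .
    then have Ct': "simn n t' v" using simn_trans[OF _ Ct] by simp
    have "length t' = length w" unfolding t'_def using w h1[symmetric] by simp
    then have "t' = w" using Kc_eq[OF K Ct'] by simp
    then have "x1 @ b # us @ y = (x1 @ us) @ a # y" unfolding t'_def w h1 .
    then have "(b # us) @ y = (us @ [a]) @ y" by simp
    then have e: "b # us = us @ [a]" by (simp only: append_same_eq)
    have "t = x1 @ (b # us) @ a # y" using t h2 by simp
    also have "\<dots> = x1 @ (us @ [a]) @ a # y" using e by simp
    also have "\<dots> = x @ a # a # y" using h1 by auto
    finally show ?thesis .
  qed
  from wx w have "x1 @ x2 = x @ (a # y)" by simp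
  then obtain us where disj: "(x1 = x @ us \<and> us @ x2 = a # y) \<or> (x1 @ us = x \<and> x2 = us @ a # y)"
    using append_eq_append_conv2[of x1 x2 x "a # y"] by auto
  show ?thesis
  proof (cases "x1 @ us = x \<and> x2 = us @ a # y")
    case True then show ?thesis using caseB by auto
  next
    case False
    then have A: "x1 = x @ us" "us @ x2 = a # y" using disj by auto
    show ?thesis
    proof (cases us)
      case Nil then show ?thesis using A caseB[of "[]"] by simp
    next
      case (Cons c us')
      then have c: "y = us' @ x2" "x1 = x @ a # us'" using A by auto
      define t' where "t' = x @ us' @ b # x2"
      have s1: "subseq (x @ y) t'" unfolding t'_def c using subseq_del_mid[of "x @ us'" x2 b] by simp
      have s2: "subseq t' t" unfolding t'_def t c using subseq_del_mid[of x "us' @ b # x2" a] by simp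
      have "simn n t' t" using sandwich[OF s1 s2 xyt] .
      then have Ct': "simn n t' v" using simn_trans[OF _ Ct] by simp
      have "length t' = length w" unfolding t'_def using w c by simp
      then have "t' = w" using Kc_eq[OF K Ct'] by simp
      then have "x @ us' @ b # x2 = x @ a # us' @ x2" unfolding t'_def w c by simp
      then have "(us' @ [b]) @ x2 = (a # us') @ x2" by simp
      then have e: "us' @ [b] = a # us'" by (simp only: append_same_eq)
      have "t = x @ (a # us' @ [b]) @ x2" using t c by simp
      also have "\<dots> = x @ (a # a # us') @ x2" using e by simp
      also have "\<dots> = x @ a # a # y" using c by simp
      finally show ?thesis .
    qed
  qed
qed

lemma LL_aux:
  assumes "x' = x @ us" "a # y = us @ b # y'" "x @ a # a # y = x' @ b # b # y'"
  shows "x @ y = x' @ y'"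
proof (cases us)
  case Nil then show ?thesis using assms by simp
next
  case (Cons c us'')
  then have c: "c = a" "y = us'' @ b # y'" using assms(2) by auto
  then have "x @ a # a # us'' @ b # y' = x @ a # us'' @ b # b # y'" using assms(1,3) Cons by simp
  then have "(a # us'' @ [b]) @ y' = (us'' @ [b, b]) @ y'" by simp
  then have "a # us'' @ [b] = us'' @ [b, b]" by (simp only: append_same_eq)
  then have "(a # us'') @ [b] = (us'' @ [b]) @ [b]" by simp
  then have e: "a # us'' = us'' @ [b]" using append1_eq_conv by blast
  have "x @ y = x @ (us'' @ [b]) @ y'" using c by simp
  also have "\<dots> = x @ (a # us'') @ y'" using e by simp
  also have "\<dots> = x' @ y'" using assms(1) Cons c by simp
  finally show ?thesis .
qed

lemma LL:
  assumes e1: "x @ a # a # y = x' @ b # b # y'" and e2: "x @ a # y = x' @ b # y'"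
  shows "x @ y = x' @ y'"
proof -
  from e2 obtain us where "(x = x' @ us \<and> us @ a # y = b # y') \<or> (x @ us = x' \<and> a # y = us @ b # y')"
    using append_eq_append_conv2[of x "a # y" x' "b # y'"] by auto
  then show ?thesis
  proof
    assume h: "x = x' @ us \<and> us @ a # y = b # y'"
    have "x' @ y' = x @ y" by (rule LL_aux[of x x' us b y' a y]) (use h e1 in auto)
    then show ?thesis by simp
  next
    assume h: "x @ us = x' \<and> a # y = us @ b # y'"
    show ?thesis by (rule LL_aux[of x' x us a y b y']) (use h e1 in auto)
  qed
qed

lemma ku:
  fixes w :: "'a list"
  assumes HA: "\<forall>z::'a list. \<exists>w. subseq w z \<and> simn n w z \<and> length w \<le> m"
    and K: "Kc n v w" and Cw: "simn n w v" and lw: "m < length w"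
  shows "simn n z v \<Longrightarrow> length w \<le> length z \<Longrightarrow> Kc n v z"
proof (induction "length z - length w" arbitrary: z)
  case 0
  then have "length z = length w" by simp
  then have "z = w" using Kc_eq[OF K 0(2)] by simp
  then show ?case using K by simp
next
  case (Suc d z)
  then have lz: "length w < length z" by simp
  have ml: "m \<le> length z - 1" using lz lw by simp
  have "length z - 1 \<le> length z" by simp
  from pump_down[OF HA ml this] obtain z' where z': "subseq z' z" "length z' = length z - 1" "simn n z' z"
    by (elim exE conjE)
  have Cz': "simn n z' v" using simn_trans[OF z'(3) Suc.prems(1)] .
  have "d = length z' - length w" using Suc.hyps(2) z'(2) by simp
  moreover have "length w \<le> length z'" using z'(2) lz by simp
  ultimately have Kz': "Kc n v z'" using Suc.hyps(1) Cz' by simp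
  have mz': "m < length z'" using z'(2) lz lw by simp
  from nonmin[OF HA mz'] obtain x a y where z'eq: "z' = x @ a # y" and hxy: "simn n (x @ y) z'"
    by (elim exE conjE)
  have Cxy: "simn n (x @ y) v" using simn_trans[OF hxy Cz'] .
  have lzz: "length z = Suc (length z')" using z'(2) lz by simp
  have zeq: "z = x @ a # a # y" by (rule upu[OF Kz' Cz' z'eq Cxy Suc.prems(1) lzz])
  show ?case unfolding Kc_def
  proof (intro allI impI)
    fix t assume Ct: "simn n t v"
    show "subseq t z \<or> subseq z t"
    proof (cases "length t \<le> length z'")
      case True
      then have "subseq t z'" using Kc_short[OF Kz' Ct] by simp
      then have "subseq t z" using z'(1) by (rule subseq_trans)
      then show ?thesis by simp
    next
      case False
      then have "length z \<le> length t" using lzz by simp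
      moreover have "m \<le> length z" using ml by simp
      ultimately have ztl: "m \<le> length z" "length z \<le> length t" by simp_all
      from pump_down[OF HA ztl] obtain t'' where t'': "subseq t'' t" "length t'' = length z" "simn n t'' t"
        by (elim exE conjE)
      have Ct'': "simn n t'' v" using simn_trans[OF t''(3) Ct] .
      have "length t'' = Suc (length z')" using t''(2) lzz by simp
      then have "t'' = x @ a # a # y" by (rule upu[OF Kz' Cz' z'eq Cxy Ct''])
      then have "t'' = z" using zeq by simp
      then have "subseq z t" using t''(1) by simp
      then show ?thesis by simp
    qed
  qed
qed

lemma kd1:
  fixes w :: "'a list"
  assumes HA: "\<forall>z::'a list. \<exists>w. subseq w z \<and> simn n w z \<and> length w \<le> m" and nm: "n \<le> m"
    and K: "Kc n v w" and Cw: "simn n w v" and w: "w = x @ a # y"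
    and h: "simn (Suc m) (x @ y) w" and lxy: "m < length (x @ y)"
  shows "Kc n v (x @ y)"
proof -
  have hn: "simn n (x @ y) w" using simn_mono[OF h] nm by simp
  have Cxy: "simn n (x @ y) v" using simn_trans[OF hn Cw] .
  have D: "z = x @ y" if Cz: "simn n z v" and lz: "length z = length (x @ y)" and zw: "subseq z w" for z
  proof -
    have "length w = Suc (length z)" using w lz by simp
    from subseq_ins[OF zw this] obtain x' b y' where w': "w = x' @ b # y'" and zeq: "z = x' @ y'"
      by (elim exE conjE)
    have xyw: "simn n (x @ y) (x @ a # y)" using hn w by simp
    define W where "W = x @ a # a # y"
    have "simn n W (x @ a # y)" unfolding W_def using xyw by (rule pump)
    then have CW: "simn n W v" using w simn_trans[OF _ Cw] by simp
    have lW: "length W = Suc (length w)" using w W_def by simp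
    have Cx'y': "simn n (x' @ y') v" using Cz zeq by simp
    have "W = x' @ b # b # y'" by (rule upu[OF K Cw w' Cx'y' CW lW])
    then have e1: "x @ a # a # y = x' @ b # b # y'" unfolding W_def .
    have e2: "x @ a # y = x' @ b # y'" using w w' by simp
    show ?thesis using LL[OF e1 e2] zeq by simp
  qed
  show ?thesis unfolding Kc_def
  proof (intro allI impI)
    fix t assume Ct: "simn n t v"
    show "subseq t (x @ y) \<or> subseq (x @ y) t"
    proof (cases "length w \<le> length t")
      case True
      then have wt: "subseq w t" using Kc_long[OF K Ct] by simp
      have "subseq (x @ y) w" using w subseq_del_mid by simp
      then have "subseq (x @ y) t" using wt by (rule subseq_trans)
      then show ?thesis by simp
    next
      case False
      then have tw: "subseq t w" using Kc_short[OF K Ct] by simp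
      show ?thesis
      proof (cases "length t \<le> Suc m")
        case True
        have "subseq t (x @ y)" using simnD[OF simn_sym[OF h] True tw] .
        then show ?thesis by simp
      next
        case False
        then have mt: "m < length t" by simp
        have "length t \<le> length (x @ y)" using \<open>\<not> length w \<le> length t\<close> w by simp
        from pump_up[OF HA mt this] obtain t' where t': "subseq t t'" "length t' = length (x @ y)" "simn n t' t"
          by (elim exE conjE)
        have Ct': "simn n t' v" using simn_trans[OF t'(3) Ct] .
        have "length t' \<le> length w" using t'(2) w by simp
        then have "subseq t' w" using Kc_short[OF K Ct'] by simp
        then have "t' = x @ y" using D[OF Ct' t'(2)] by simp
        then show ?thesis using t'(1) by simp
      qed
    qed
  qed
qed

lemma kd:
  fixes s :: "'a list"
  assumes HA: "\<forall>z::'a list. \<exists>w. subseq w z \<and> simn n w z \<and> length w \<le> m" and nm: "n \<le> m"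
    and ms: "m < length s"
  shows "subseq s w \<Longrightarrow> simn (Suc m) s w \<Longrightarrow> Kc n v w \<Longrightarrow> simn n w v \<Longrightarrow> Kc n v s"
proof (induction "length w - length s" arbitrary: w)
  case 0
  then have "length w \<le> length s" by simp
  then have "length s = length w" using list_emb_length[OF 0(2)] by simp
  then have "s = w" using subseq_same_length[OF 0(2)] by simp
  then show ?case using 0 by simp
next
  case (Suc d w)
  then have "length s < length w" by simp
  from subseq_del[OF Suc.prems(1) this] obtain x a y where w: "w = x @ a # y" and sxy: "subseq s (x @ y)"
    by (elim exE conjE)
  have xyw: "subseq (x @ y) w" using w subseq_del_mid by simp
  have h: "simn (Suc m) (x @ y) w" using sandwich[OF sxy xyw Suc.prems(2)] .
  have lxy: "m < length (x @ y)" using ms list_emb_length[OF sxy] by simp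
  have Kxy: "Kc n v (x @ y)" by (rule kd1[OF HA nm Suc.prems(3) Suc.prems(4) w h lxy])
  have "simn n (x @ y) w" using simn_mono[OF h] nm by simp
  then have Cxy: "simn n (x @ y) v" using simn_trans[OF _ Suc.prems(4)] by simp
  have sxy2: "simn (Suc m) s (x @ y)" using simn_trans[OF Suc.prems(2) simn_sym[OF h]] .
  have "d = length (x @ y) - length s" using Suc.hyps(2) w by simp
  then show ?case using Suc.hyps(1)[OF _ sxy sxy2 Kxy Cxy] by simp
qed

lemma main:
  fixes u u' v :: "'a list"
  assumes HA: "\<forall>z::'a list. \<exists>w. subseq w z \<and> simn n w z \<and> length w \<le> m" and nm: "n \<le> m"
    and PTL: "PT n L" and uu: "simn (Suc m) u u'" and vL: "v \<in> L" and inc: "incomparable u v"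
  shows "\<exists>v'\<in>L. incomparable u' v'"
proof -
  have inL: "z \<in> L" if zv: "simn n z v" for z
  proof -
    have "simn n z v \<longrightarrow> (z \<in> L \<longleftrightarrow> v \<in> L)" using PTL unfolding PT_def by (elim allE)
    then show ?thesis using zv vL by simp
  qed
  have uv1: "\<not> subseq u v" and uv2: "\<not> subseq v u" using inc unfolding incomparable_def by simp_all
  show ?thesis
  proof (cases "length u \<le> m")
    case True
    have "subseq u u" by (rule subseq_order.order_refl)
    then have uu': "subseq u u'" using simnD[OF uu] True by simp
    have "length u' \<le> length u"
    proof (rule ccontr)
      assume "\<not> length u' \<le> length u"
      then have l1: "length (take (Suc (length u)) u') = Suc (length u)" by simp
      have s1: "subseq (take (Suc (length u)) u') u'" by (rule subseq_take_self)
      have "length (take (Suc (length u)) u') \<le> Suc m" using l1 True by simp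
      then have "subseq (take (Suc (length u)) u') u" using simnD[OF simn_sym[OF uu] _ s1] by simp
      then have "length (take (Suc (length u)) u') \<le> length u" by (rule list_emb_length)
      then show False using l1 by simp
    qed
    then have "length u = length u'" using list_emb_length[OF uu'] by simp
    then have "u = u'" by (rule subseq_same_length[OF uu'])
    then show ?thesis using vL inc by (intro bexI[of _ v]) simp_all
  next
    case False
    then have mu: "m < length u" by simp
    have "subseq (take (Suc m) u) u" by (rule subseq_take_self)
    then have "subseq (take (Suc m) u) u'" using simnD[OF uu] by simp
    then have "length (take (Suc m) u) \<le> length u'" by (rule list_emb_length)
    then have mu': "m < length u'" using mu by simp
    show ?thesis
    proof (cases "length v \<le> Suc m")
      case True
      have nvu': "\<not> subseq v u'"
      proof
        assume "subseq v u'"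
        then have "subseq v u" using simnD[OF simn_sym[OF uu] True] by simp
        then show False using uv2 by simp
      qed
      moreover have "\<not> subseq u' v"
      proof
        assume h: "subseq u' v"
        then have "length u' \<le> length v" by (rule list_emb_length)
        then have "length u' = length v" using True mu' by simp
        then have "u' = v" by (rule subseq_same_length[OF h])
        then show False using nvu' by simp
      qed
      ultimately show ?thesis using vL unfolding incomparable_def by (intro bexI[of _ v] conjI) simp_all
    next
      case False
      then have mv: "m < length v" by simp
      show ?thesis
      proof (cases "\<exists>t. length t \<le> n \<and> subseq t u \<and> \<not> subseq t v")
        case True
        then obtain t where t: "length t \<le> n" "subseq t u" "\<not> subseq t v" by auto
        have "length v \<le> length v + length u' + 1" by simp
        from pump_up[OF HA mv this] obtain v' where v': "subseq v v'" "length v' = length v + length u' + 1" "simn n v' v"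
          by (elim exE conjE)
        have "v' \<in> L" using inL v'(3) .
        moreover have "\<not> subseq v' u'" using v'(2) by simp
        moreover have "\<not> subseq u' v'"
        proof
          assume h: "subseq u' v'"
          have "length t \<le> Suc m" using t(1) nm by simp
          then have "subseq t u'" using simnD[OF uu] t(2) by simp
          then have "subseq t v'" using h by (rule subseq_trans)
          then have "subseq t v" using simnD[OF v'(3) t(1)] by simp
          then show False using t(3) by simp
        qed
        ultimately show ?thesis unfolding incomparable_def by (intro bexI[of _ v'] conjI) simp_all
      next
        case False
        then have down: "subseq t v" if "length t \<le> n" "subseq t u" for t using that by auto
        from spec[OF HA, of v] obtain \<mu> where muf: "subseq \<mu> v" "simn n \<mu> v" "length \<mu> \<le> m"
          by (elim exE conjE)
        show ?thesis
        proof (cases "subseq \<mu> u")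
          case False
          have "\<mu> \<in> L" using inL muf(2) .
          moreover have "\<not> subseq \<mu> u'"
          proof
            assume "subseq \<mu> u'"
            then have "subseq \<mu> u" using simnD[OF simn_sym[OF uu]] muf(3) by simp
            then show False using False by simp
          qed
          moreover have "\<not> subseq u' \<mu>" using muf(3) mu' by simp
          ultimately show ?thesis unfolding incomparable_def by (intro bexI[of _ \<mu>] conjI) simp_all
        next
          case True
          have Cu: "simn n u v" unfolding simn_def
          proof (intro allI impI iffI)
            fix t assume "length t \<le> n" "subseq t u" then show "subseq t v" using down by simp
          next
            fix t assume lt: "length t \<le> n" and "subseq t v"
            then have "subseq t \<mu>" using simnD[OF simn_sym[OF muf(2)]] by simp
            then show "subseq t u" using True by (rule subseq_trans)
          qed
          have uun: "simn n u u'" using simn_mono[OF uu] nm by simp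
          have Cu': "simn n u' v" using simn_trans[OF simn_sym[OF uun] Cu] .
          have uL: "u \<in> L" using inL Cu .
          show ?thesis
          proof (rule ccontr)
            assume nex: "\<not> ?thesis"
            have Ku': "Kc n v u'" unfolding Kc_def
            proof (intro allI impI)
              fix z assume "simn n z v"
              then have "z \<in> L" by (rule inL)
              then have "\<not> incomparable u' z" using nex by simp
              then show "subseq z u' \<or> subseq u' z" unfolding incomparable_def by (simp add: disj_commute)
            qed
            have "\<not> incomparable u' u" using nex uL by simp
            then have cmp: "subseq u' u \<or> subseq u u'" unfolding incomparable_def by simp
            have Ku: "Kc n v u"
            proof (cases "subseq u' u")
              case True
              then have "length u' \<le> length u" by (rule list_emb_length)
              then show ?thesis using ku[OF HA Ku' Cu' mu' Cu] by simp
            next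
              case False
              then have "subseq u u'" using cmp by simp
              then show ?thesis using kd[OF HA nm mu _ uu Ku' Cu'] by simp
            qed
            have "subseq v u \<or> subseq u v" using Ku simn_refl[of n v] unfolding Kc_def by simp
            then show False using uv1 uv2 by simp
          qed
        qed
      qed
    qed
  qed
qed

theorem theorem20:
  fixes L :: "('a::finite) list set" and k n :: nat
  assumes "card (UNIV :: 'a set) = k"
    and "PT n L"
  shows "PT (f k n + 1) (Inc L)"
proof -
  define m where "m = f k n"
  have k1: "k \<ge> 1" using assms(1) card_gt_0_iff[of "UNIV :: 'a set"] by simp
  have nm: "n \<le> m" unfolding m_def using f_ge[OF k1] .
  have HA: "\<forall>z::'a list. \<exists>w. subseq w z \<and> simn n w z \<and> length w \<le> m"
    unfolding m_def using lemmaA[OF assms(1)] by auto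
  have dir: "u' \<in> Inc L" if uu: "simn (Suc m) u u'" and uI: "u \<in> Inc L" for u u' :: "'a list"
  proof -
    from uI obtain v where "v \<in> L" "incomparable u v" unfolding Inc_def by auto
    from main[OF HA nm assms(2) uu this] obtain v' where "v' \<in> L" "incomparable u' v'" by auto
    then show ?thesis unfolding Inc_def by auto
  qed
  show ?thesis unfolding PT_def
  proof (intro allI impI)
    fix u u' :: "'a list" assume "simn (f k n + 1) u u'"
    then have h: "simn (Suc m) u u'" unfolding m_def by simp
    show "(u \<in> Inc L) = (u' \<in> Inc L)" using dir[OF h] dir[OF simn_sym[OF h]] by auto
  qed
qed

end
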